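(* Let $X$ be a topological space. If \textsc{Alice} does not have a winning strategy in the game $\mathsf{BM}_\omega(X)$, then $X$ is a Baire space.
   Context: The game $\mathsf{BM}_\omega(X)$ on a topological space $X$ is played by \textsc{Alice} and \textsc{Bob} as follows. \textsc{Alice} plays a non-empty open set $A_0$; \textsc{Bob} plays a countable collection $\mathcal{B}_0$ of non-empty open subsets of $A_0$. In inning $n+1$, for each $B \in \mathcal{B}_n$ \textsc{Alice} plays a non-empty open set $A_B \subseteq B$; let $\mathcal{A}_{n+1}=\{A_B : B\in\mathcal{B}_n\}$; then \textsc{Bob} plays a countable collection $\mathcal{B}_{n+1}$ of non-empty open subsets of $\bigcup\mathcal{A}_{n+1}$. Put $B_n=\bigcup\mathcal{B}_n$. \textsc{Bob} wins the play if $\bigcap_{n\in\omega}B_n\neq\emptyset$; otherwise \textsc{Alice} wins. A Baire space is a space in which countable intersections of dense open sets are dense. *)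

theory Defs
  imports "HOL-Analysis.Analysis"
begin

text \<open>A Baire space: countable intersections of dense open sets are dense.
  (The intersection is taken inside the topspace, so the empty family gives the whole space.)\<close>
definition Baire_space :: "'a topology \<Rightarrow> bool" where
  "Baire_space X \<longleftrightarrow>
     (\<forall>\<U>. countable \<U> \<and> (\<forall>U\<in>\<U>. openin X U \<and> X closure_of U = topspace X)
        \<longrightarrow> X closure_of (topspace X \<inter> \<Inter>\<U>) = topspace X)"

text \<open>A strategy of Alice consists of her first move a0 and a
  function sigma: given the history [B_0, ..., B_n] of Bob's moves so far and a set B in B_n,
  sigma returns Alice's answer A_B. (Alice's own previous moves are determined by the
  strategy and Bob's moves, so the history of Bob's moves is the full information.)\<close>

definition alice_strategy ::
  "'a topology \<Rightarrow> 'a set \<Rightarrow> ('a set set list \<Rightarrow> 'a set \<Rightarrow> 'a set) \<Rightarrow> bool" where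
  "alice_strategy X a0 \<sigma> \<longleftrightarrow>
     openin X a0 \<and> a0 \<noteq> {} \<and>
     (\<forall>h B. openin X B \<and> B \<noteq> {} \<longrightarrow> openin X (\<sigma> h B) \<and> \<sigma> h B \<noteq> {} \<and> \<sigma> h B \<subseteq> B)"

definition bob_move :: "'a topology \<Rightarrow> 'a set \<Rightarrow> 'a set set \<Rightarrow> bool" where
  "bob_move X S \<B> \<longleftrightarrow> countable \<B> \<and> (\<forall>B\<in>\<B>. openin X B \<and> B \<noteq> {} \<and> B \<subseteq> S)"

definition play_against ::
  "'a topology \<Rightarrow> 'a set \<Rightarrow> ('a set set list \<Rightarrow> 'a set \<Rightarrow> 'a set) \<Rightarrow> (nat \<Rightarrow> 'a set set) \<Rightarrow> bool" where
  "play_against X a0 \<sigma> \<B>s \<longleftrightarrow>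
     bob_move X a0 (\<B>s 0) \<and>
     (\<forall>n. bob_move X (\<Union> (\<sigma> (map \<B>s [0..<Suc n]) ` \<B>s n)) (\<B>s (Suc n)))"

definition alice_winning_strategy ::
  "'a topology \<Rightarrow> 'a set \<Rightarrow> ('a set set list \<Rightarrow> 'a set \<Rightarrow> 'a set) \<Rightarrow> bool" where
  "alice_winning_strategy X a0 \<sigma> \<longleftrightarrow>
     alice_strategy X a0 \<sigma> \<and>
     (\<forall>\<B>s. play_against X a0 \<sigma> \<B>s \<longrightarrow> (\<Inter>n. \<Union>(\<B>s n)) = {})"

end

theory Submission
  imports Defs
begin

theorem proposition3p2:
  fixes X :: "'a topology"
  assumes "\<not> (\<exists>a0 \<sigma>. alice_winning_strategy X a0 \<sigma>)"
  shows "Baire_space X"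
proof (rule ccontr)
  assume "\<not> Baire_space X"
  then obtain \<U> where cU: "countable \<U>" and dU: "\<forall>U\<in>\<U>. openin X U \<and> X closure_of U = topspace X"
    and nd: "X closure_of (topspace X \<inter> \<Inter>\<U>) \<noteq> topspace X"
    unfolding Baire_space_def by blast
  from nd obtain W where W: "openin X W" "W \<noteq> {}" "(topspace X \<inter> \<Inter>\<U>) \<inter> W = {}"
    unfolding dense_intersects_open by blast
  have Wsub: "W \<subseteq> topspace X" using W(1) openin_subset by blast
  have Une: "\<U> \<noteq> {}"
  proof
    assume "\<U> = {}"
    then show False using nd by simp
  qed
  define f where "f = from_nat_into \<U>"
  have fU: "\<And>n. f n \<in> \<U>" unfolding f_def using from_nat_into[OF Une] by blast
  have rng: "range f = \<U>" unfolding f_def using Une cU by simp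
  define \<sigma> where "\<sigma> = (\<lambda>(h::'a set set list) B. B \<inter> f (length h - 1))"
  have strat: "alice_strategy X W \<sigma>"
    unfolding alice_strategy_def
  proof (intro conjI allI impI W(1) W(2))
    fix h :: "'a set set list" and B assume B: "openin X B \<and> B \<noteq> {}"
    have o: "openin X (f (length h - 1))" and d: "X closure_of (f (length h - 1)) = topspace X"
      using dU fU by auto
    show "openin X (\<sigma> h B)" unfolding \<sigma>_def using B o by auto
    show "\<sigma> h B \<noteq> {}" unfolding \<sigma>_def using B d unfolding dense_intersects_open by blast
    show "\<sigma> h B \<subseteq> B" unfolding \<sigma>_def by auto
  qed
  have "alice_winning_strategy X W \<sigma>"
    unfolding alice_winning_strategy_def
  proof (intro conjI strat allI impI)
    fix Bs assume P: "play_against X W \<sigma> Bs"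
    have B0: "\<Union>(Bs 0) \<subseteq> W" using P unfolding play_against_def bob_move_def by blast
    have Bn: "\<Union>(Bs (Suc n)) \<subseteq> f n" for n
    proof -
      have "bob_move X (\<Union> (\<sigma> (map Bs [0..<Suc n]) ` Bs n)) (Bs (Suc n))"
        using P unfolding play_against_def by blast
      then have "\<Union>(Bs (Suc n)) \<subseteq> \<Union> (\<sigma> (map Bs [0..<Suc n]) ` Bs n)"
        unfolding bob_move_def by blast
      also have "\<dots> \<subseteq> f n" unfolding \<sigma>_def by auto
      finally show ?thesis .
    qed
    show "(\<Inter>n. \<Union>(Bs n)) = {}"
    proof (rule equals0I)
      fix x assume x: "x \<in> (\<Inter>n. \<Union>(Bs n))"
      have xW: "x \<in> W" using x B0 by blast
      have "x \<in> \<Inter>\<U>"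
      proof
        fix U assume "U \<in> \<U>"
        then obtain n where "U = f n" using rng by blast
        then show "x \<in> U" using x Bn[of n] by blast
      qed
      then show False using xW Wsub W(3) by blast
    qed
  qed
  then show False using assms by blast
qed

end
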